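(* Let $F$ be $\mathbb{C}$ or $\mathbb{R}$ and let $\mathfrak{L}$ be a solvable (left) Leibniz algebra over $F$ of dimension $r+1$ whose nilradical is the $r$-dimensional abelian algebra $A(r)$, so that $\mathfrak{L}$ has a basis $\{n_1,\dots,n_r,x\}$ with $n_1,\dots,n_r$ a basis of $A(r)$. Let $R\in F^{r\times r}$ be the matrix defined by $[n_i,x]=\sum_j R_{ij}n_j$ (the right action of $x$ on $A(r)$). If $R$ is nonsingular, then $\mathfrak{L}$ is a Lie algebra, i.e. $[y,z]=-[z,y]$ for all $y,z\in\mathfrak{L}$.
   Context: A (left) Leibniz algebra is a vector space with bilinear product satisfying $[x,[y,z]]=[[x,y],z]+[y,[x,z]]$. Solvable: derived series $\mathfrak{L}^{(1)}=[\mathfrak{L},\mathfrak{L}]$, $\mathfrak{L}^{(n+1)}=[\mathfrak{L}^{(n)},\mathfrak{L}^{(n)}]$ eventually zero. Nilradical: the unique maximal nilpotent ideal (nilpotent meaning the lower central series $\mathfrak{L}^2=[\mathfrak{L},\mathfrak{L}]$, $\mathfrak{L}^{k+1}=[\mathfrak{L},\mathfrak{L}^k]$ eventually vanishes). $A(r)$ is the $r$-dimensional algebra with all products zero. *)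

theory Defs
  imports Complex_Main "Jordan_Normal_Form.Determinant"
begin

definition leibniz_algebra :: "('k::field \<Rightarrow> 'v::ab_group_add \<Rightarrow> 'v) \<Rightarrow> ('v \<Rightarrow> 'v \<Rightarrow> 'v) \<Rightarrow> bool" where
  "leibniz_algebra sc br \<longleftrightarrow>
     vector_space sc \<and>
     (\<forall>a b c. br (a + b) c = br a c + br b c) \<and>
     (\<forall>a b c. br a (b + c) = br a b + br a c) \<and>
     (\<forall>k a b. br (sc k a) b = sc k (br a b)) \<and>
     (\<forall>k a b. br a (sc k b) = sc k (br a b)) \<and>
     (\<forall>x y z. br x (br y z) = br (br x y) z + br y (br x z))"

definition brset :: "('k::field \<Rightarrow> 'v::ab_group_add \<Rightarrow> 'v) \<Rightarrow> ('v \<Rightarrow> 'v \<Rightarrow> 'v) \<Rightarrow> 'v set \<Rightarrow> 'v set \<Rightarrow> 'v set" where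
  "brset sc br A B = module.span sc {br a b | a b. a \<in> A \<and> b \<in> B}"

fun derived :: "('k::field \<Rightarrow> 'v::ab_group_add \<Rightarrow> 'v) \<Rightarrow> ('v \<Rightarrow> 'v \<Rightarrow> 'v) \<Rightarrow> nat \<Rightarrow> 'v set" where
  "derived sc br 0 = UNIV"
| "derived sc br (Suc n) = brset sc br (derived sc br n) (derived sc br n)"

definition solvable :: "('k::field \<Rightarrow> 'v::ab_group_add \<Rightarrow> 'v) \<Rightarrow> ('v \<Rightarrow> 'v \<Rightarrow> 'v) \<Rightarrow> bool" where
  "solvable sc br \<longleftrightarrow> (\<exists>n. derived sc br n = {0})"

definition is_ideal :: "('k::field \<Rightarrow> 'v::ab_group_add \<Rightarrow> 'v) \<Rightarrow> ('v \<Rightarrow> 'v \<Rightarrow> 'v) \<Rightarrow> 'v set \<Rightarrow> bool" where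
  "is_ideal sc br I \<longleftrightarrow> module.subspace sc I \<and> (\<forall>y z. z \<in> I \<longrightarrow> br y z \<in> I \<and> br z y \<in> I)"

text \<open>Lower central series of a subalgebra I: I^1 = I, I^(k+1) = [I, I^k]
  (indexed here from 0: lcs 0 = I^1).\<close>
fun lcs :: "('k::field \<Rightarrow> 'v::ab_group_add \<Rightarrow> 'v) \<Rightarrow> ('v \<Rightarrow> 'v \<Rightarrow> 'v) \<Rightarrow> 'v set \<Rightarrow> nat \<Rightarrow> 'v set" where
  "lcs sc br I 0 = I"
| "lcs sc br I (Suc k) = brset sc br I (lcs sc br I k)"

definition nilpotent_sub :: "('k::field \<Rightarrow> 'v::ab_group_add \<Rightarrow> 'v) \<Rightarrow> ('v \<Rightarrow> 'v \<Rightarrow> 'v) \<Rightarrow> 'v set \<Rightarrow> bool" where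
  "nilpotent_sub sc br I \<longleftrightarrow> (\<exists>k. lcs sc br I k = {0})"

definition is_nilradical :: "('k::field \<Rightarrow> 'v::ab_group_add \<Rightarrow> 'v) \<Rightarrow> ('v \<Rightarrow> 'v \<Rightarrow> 'v) \<Rightarrow> 'v set \<Rightarrow> bool" where
  "is_nilradical sc br N \<longleftrightarrow> is_ideal sc br N \<and> nilpotent_sub sc br N \<and>
     (\<forall>J. is_ideal sc br J \<and> nilpotent_sub sc br J \<longrightarrow> J \<subseteq> N)"

definition lemma4p2_claim :: "('k::field \<Rightarrow> 'v::ab_group_add \<Rightarrow> 'v) \<Rightarrow> ('v \<Rightarrow> 'v \<Rightarrow> 'v) \<Rightarrow> bool" where
  "lemma4p2_claim sc br \<longleftrightarrow>
    (\<forall>(r::nat) (N::'v set) (n::nat \<Rightarrow> 'v) (x::'v) (R::'k mat).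
      leibniz_algebra sc br \<longrightarrow> solvable sc br \<longrightarrow>
      is_nilradical sc br N \<longrightarrow>
      (\<forall>a\<in>N. \<forall>b\<in>N. br a b = 0) \<longrightarrow>
      inj_on n {..<r} \<longrightarrow> x \<notin> n ` {..<r} \<longrightarrow>
      \<not> module.dependent sc (insert x (n ` {..<r})) \<longrightarrow>
      module.span sc (insert x (n ` {..<r})) = UNIV \<longrightarrow>
      module.span sc (n ` {..<r}) = N \<longrightarrow>
      R \<in> carrier_mat r r \<longrightarrow>
      (\<forall>i<r. br (n i) x = (\<Sum>j<r. sc (R $$ (i, j)) (n j))) \<longrightarrow>
      det R \<noteq> 0 \<longrightarrow>
      (\<forall>y z. br y z = - br z y))"

end

theory Submission
  imports Defs
begin

lemma main_lemma:
  fixes sc :: "'k::field \<Rightarrow> 'v::ab_group_add \<Rightarrow> 'v" and br :: "'v \<Rightarrow> 'v \<Rightarrow> 'v"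
    and R :: "'k mat"
  assumes L: "leibniz_algebra sc br" and solv: "solvable sc br"
  and nil: "is_nilradical sc br N"
  and ab: "\<forall>a\<in>N. \<forall>b\<in>N. br a b = 0"
  and inj: "inj_on n {..<r}" and xn: "x \<notin> n ` {..<r}"
  and ind: "\<not> module.dependent sc (insert x (n ` {..<r}))"
  and sp: "module.span sc (insert x (n ` {..<r})) = UNIV"
  and spN: "module.span sc (n ` {..<r}) = N"
  and Rc: "R \<in> carrier_mat r r"
  and Rx: "\<forall>i<r. br (n i) x = (\<Sum>j<r. sc (R $$ (i, j)) (n j))"
  and dR: "det R \<noteq> 0"
  shows "br y z = - br z y"
proof -
  interpret V: vector_space sc using L unfolding leibniz_algebra_def by blast
  have addL: "\<And>a b c. br (a + b) c = br a c + br b c"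
   and addR: "\<And>a b c. br a (b + c) = br a b + br a c"
   and scL: "\<And>k a b. br (sc k a) b = sc k (br a b)"
   and scR: "\<And>k a b. br a (sc k b) = sc k (br a b)"
   and leib: "\<And>x y z. br x (br y z) = br (br x y) z + br y (br x z)"
    using L unfolding leibniz_algebra_def by blast+
  have br0L: "br 0 c = 0" for c using addL[of 0 0 c] by simp
  have br0R: "br c 0 = 0" for c using addR[of c 0 0] by simp
  have brsum: "br (sum f A) c = (\<Sum>i\<in>A. br (f i) c)" for f A c
  proof (cases "finite A")
    case True then show ?thesis by (induction A rule: finite_induct) (auto simp: br0L addL)
  qed (simp add: br0L)
  have sq: "br (br a a) c = 0" for a c using leib[of a a c] by simp
  have key: "br (br a b + br b a) c = 0" for a b c
  proof -
    have "br (br (a+b) (a+b)) c = 0" by (rule sq)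
    then show ?thesis using sq[of a c] sq[of b c] by (simp add: addL addR add_ac)
  qed
  define S where "S = n ` {..<r}"
  have finS: "finite S" unfolding S_def by simp
  have indS: "\<not> V.dependent S" using ind V.dependent_mono unfolding S_def by blast
  have idl: "is_ideal sc br N" using nil unfolding is_nilradical_def by blast
  have subN: "V.subspace N" using idl unfolding is_ideal_def by blast
  have idl2: "\<And>y m. m \<in> N \<Longrightarrow> br y m \<in> N \<and> br m y \<in> N" using idl unfolding is_ideal_def by blast
  have injx: "u = 0" if uN: "u \<in> N" and ux: "br u x = 0" for u
  proof -
    from uN have "u \<in> V.span S" using spN S_def by simp
    then obtain c where u: "u = (\<Sum>v\<in>S. sc (c v) v)" using V.span_finite[OF finS] by blast
    have u2: "u = (\<Sum>i<r. sc (c (n i)) (n i))" using u inj unfolding S_def by (simp add: sum.reindex)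
    have "br u x = (\<Sum>i<r. sc (c (n i)) (br (n i) x))" unfolding u2 brsum by (simp add: scL)
    also have "\<dots> = (\<Sum>i<r. \<Sum>j<r. sc (c (n i) * R $$ (i,j)) (n j))" using Rx by (simp add: V.scale_sum_right)
    also have "\<dots> = (\<Sum>j<r. sc (\<Sum>i<r. c (n i) * R $$ (i,j)) (n j))"
      by (subst sum.swap) (simp add: V.scale_sum_left)
    finally have z: "(\<Sum>j<r. sc (\<Sum>i<r. c (n i) * R $$ (i,j)) (n j)) = 0" using ux by simp
    define d where "d v = (\<Sum>i<r. c (n i) * R $$ (i, the_inv_into {..<r} n v))" for v
    have "(\<Sum>v\<in>S. sc (d v) v) = (\<Sum>j<r. sc (d (n j)) (n j))" unfolding S_def using inj by (simp add: sum.reindex)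
    also have "\<dots> = (\<Sum>j<r. sc (\<Sum>i<r. c (n i) * R $$ (i,j)) (n j))"
      using inj by (intro sum.cong) (auto simp: d_def the_inv_into_f_f)
    finally have "(\<Sum>v\<in>S. sc (d v) v) = 0" using z by simp
    hence dz: "\<forall>v\<in>S. d v = 0" using indS V.dependent_finite[OF finS] by blast
    have cz: "(\<Sum>i<r. c (n i) * R $$ (i,j)) = 0" if "j<r" for j
    proof -
      have "d (n j) = 0" using dz that unfolding S_def by auto
      thus ?thesis using that inj unfolding d_def by (simp add: the_inv_into_f_f)
    qed
    define w where "w = vec r (\<lambda>i. c (n i))"
    have Tc: "transpose_mat R \<in> carrier_mat r r" using Rc by simp
    have "transpose_mat R *\<^sub>v w = 0\<^sub>v r"
    proof (rule eq_vecI)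
      fix j assume j: "j < dim_vec (0\<^sub>v r :: 'k vec)"
      then have jr: "j<r" by simp
      have "(transpose_mat R *\<^sub>v w) $ j = row (transpose_mat R) j \<bullet> w" using jr Tc by simp
      also have "\<dots> = (\<Sum>i<r. R $$ (i,j) * c (n i))" using jr Rc unfolding w_def scalar_prod_def
        by (auto intro!: sum.cong simp: lessThan_atLeast0)
      also have "\<dots> = 0" using cz[OF jr] by (simp add: mult.commute)
      finally show "(transpose_mat R *\<^sub>v w) $ j = 0\<^sub>v r $ j" using jr by simp
    qed (use Tc in simp)
    moreover have "det (transpose_mat R) \<noteq> 0" using dR det_transpose[OF Rc] by simp
    moreover have "w \<in> carrier_vec r" unfolding w_def by simp
    ultimately have w0: "w = 0\<^sub>v r" using det_0_iff_vec_prod_zero_field[OF Tc] by blast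
    have "c (n i) = 0" if "i<r" for i using that w0 unfolding w_def by (metis index_vec index_zero_vec(1))
    thus ?thesis using u2 by simp
  qed
  have phiN: "br x m = - br m x" if "m \<in> N" for m
  proof -
    have "br x m + br m x \<in> N" using idl2[OF that] subN V.subspace_add by blast
    moreover have "br (br x m + br m x) x = 0" by (rule key)
    ultimately have "br x m + br m x = 0" by (rule injx)
    thus ?thesis by (simp add: eq_neg_iff_add_eq_0)
  qed
  have N0: "N = V.span S" using spN S_def by simp
  have x0: "x \<noteq> 0"
  proof
    assume "x = 0"
    hence "V.dependent (insert x (n ` {..<r}))" by (intro V.dependent_zero) simp
    with ind show False by simp
  qed
  have xx: "br x x = 0"
  proof -
    have "br x x \<in> V.span (insert x S)" using sp S_def by simp
    then obtain k where mN0: "br x x - sc k x \<in> N" using N0 V.span_insert by blast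
    define m where "m = br x x - sc k x"
    have mN: "m \<in> N" using mN0 m_def by simp
    have xxe: "br x x = sc k x + m" unfolding m_def by simp
    have "k = 0"
    proof (rule ccontr)
      assume k: "k \<noteq> 0"
      show False
      proof (cases "r = 0")
        case True
        then have "S = {}" unfolding S_def by simp
        then have "N = {0}" using N0 by simp
        then have m0: "m = 0" using mN by simp
        have spx: "V.span {x} = UNIV" using sp \<open>S = {}\<close> S_def by simp
        have "derived sc br i = UNIV" for i
        proof (induction i)
          case (Suc i)
          let ?B = "brset sc br (derived sc br i) (derived sc br i)"
          have "br x x \<in> {br a b | a b. a \<in> derived sc br i \<and> b \<in> derived sc br i}" using Suc by auto
          hence "br x x \<in> ?B" unfolding brset_def by (rule V.span_base)
          hence "sc (inverse k) (br x x) \<in> ?B" unfolding brset_def by (rule V.span_scale)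
          hence "x \<in> ?B" using xxe m0 k by simp
          hence "{x} \<subseteq> ?B" by simp
          hence "V.span {x} \<subseteq> V.span ?B" by (rule V.span_mono)
          hence "V.span {x} \<subseteq> ?B" unfolding brset_def V.span_span .
          thus ?case using spx by auto
        qed simp
        then show False using solv x0 unfolding solvable_def by auto
      next
        case False
        hence n0S: "n 0 \<in> S" unfolding S_def by simp
        hence n0N: "n 0 \<in> N" unfolding N0 by (rule V.span_base)
        have "br (br x x) (n 0) = 0" by (rule sq)
        hence "sc k (br x (n 0)) = 0" using ab mN n0N unfolding xxe by (simp add: addL scL)
        hence "br x (n 0) = 0" using k by simp
        hence "br (n 0) x = 0" using phiN[OF n0N] by simp
        hence "n 0 = 0" using injx n0N by blast
        thus False using n0S indS V.dependent_zero by auto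
      qed
    qed
    hence "br x x = m" using xxe by simp
    moreover have "br (br x x) x = 0" by (rule sq)
    ultimately show ?thesis using injx mN by simp
  qed
  have dec: "\<exists>a m. m \<in> N \<and> y = sc a x + m" for y
  proof -
    have "y \<in> V.span (insert x S)" using sp S_def by simp
    then obtain k where "y - sc k x \<in> N" using N0 V.span_insert by blast
    thus ?thesis by (metis add.commute diff_add_cancel)
  qed
  obtain a m where m: "m \<in> N" "y = sc a x + m" using dec by blast
  obtain b m' where m': "m' \<in> N" "z = sc b x + m'" using dec by blast
  have "br m m' = 0" "br m' m = 0" using ab m m' by auto
  then have "br y z + br z y = 0"
    using m m' by (simp add: addL addR scL scR xx phiN V.scale_minus_right algebra_simps)
  thus ?thesis by (simp add: eq_neg_iff_add_eq_0)
qed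

theorem lemma4p2:
  fixes scR :: "real \<Rightarrow> 'v::ab_group_add \<Rightarrow> 'v" and brR :: "'v \<Rightarrow> 'v \<Rightarrow> 'v"
    and scC :: "complex \<Rightarrow> 'w::ab_group_add \<Rightarrow> 'w" and brC :: "'w \<Rightarrow> 'w \<Rightarrow> 'w"
  shows "lemma4p2_claim scR brR \<and> lemma4p2_claim scC brC"
  unfolding lemma4p2_claim_def
  by (intro conjI allI impI; rule main_lemma; assumption)

end
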